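(* Let $B=(b_{jk})_{1\le j,k\le n}$ be a complex matrix with units on the diagonal such that $|b_{jk}|<3/2$ whenever $j<k$ and $|b_{jk}|<4^{-n}$ whenever $j>k$. Then $B$ is non-degenerate. *)

theory Defs
  imports Complex_Main "Jordan_Normal_Form.Determinant"
begin

end

theory Submission
  imports Defs
begin

lemma nat_bound: "m * 5 ^ m \<le> (8::nat) ^ m"
proof (induction m)
  case 0 then show ?case by simp
next
  case (Suc m)
  show ?case
  proof (cases "m \<le> 1")
    case True
    then have "m = 0 \<or> m = 1" by auto
    then show ?thesis by auto
  next
    case False
    have "Suc m * 5 ^ Suc m = 5 * (Suc m) * 5 ^ m" by (simp add: algebra_simps)
    also have "\<dots> \<le> 8 * m * 5 ^ m" using False by (intro mult_right_mono) auto
    also have "\<dots> \<le> 8 * 8 ^ m" using Suc by simp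
    finally show ?thesis by simp
  qed
qed

lemma real_bound: "real (n - 1) * (5/8) ^ n < 1"
proof (cases "n = 0")
  case True then show ?thesis by simp
next
  case False
  have "(n - 1) * 5 ^ (n-1) \<le> (8::nat) ^ (n-1)" by (rule nat_bound)
  hence "(n - 1) * 5 ^ n \<le> 5 * (8::nat) ^ (n-1)"
    by (cases n) (auto simp: mult_ac)
  also have "\<dots> < 8 ^ n" using False by (cases n) auto
  finally have "real ((n-1) * 5^n) < real (8^n)" by linarith
  hence "real (n-1) * 5^n < 8^n" by simp
  thus ?thesis by (simp add: power_divide field_simps)
qed

lemma kernel_zero:
  fixes b :: "nat \<Rightarrow> nat \<Rightarrow> complex" and x :: "nat \<Rightarrow> complex"
  assumes eq: "\<And>j. j < n \<Longrightarrow> (\<Sum>k<n. b j k * x k) = 0"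
    and d: "\<And>j. j < n \<Longrightarrow> b j j = 1"
    and up: "\<And>j k. j < k \<Longrightarrow> k < n \<Longrightarrow> cmod (b j k) < 3 / 2"
    and lo: "\<And>j k. k < j \<Longrightarrow> j < n \<Longrightarrow> cmod (b j k) < 1 / 4 ^ n"
    and i: "i < n"
  shows "x i = 0"
proof (rule ccontr)
  assume xi: "x i \<noteq> 0"
  define S where "S = Max ((\<lambda>k. cmod (x k)) ` {..<n})"
  have Sge: "cmod (x k) \<le> S" if "k < n" for k
    unfolding S_def using that by (intro Max_ge) auto
  have Spos: "S > 0" using Sge[OF i] xi by (meson less_le_trans zero_less_norm_iff)
  define \<delta> where "\<delta> = real (n - 1) * (1 / 4 ^ n) * S"
  define T where "T j = (\<Sum>k\<in>{j..<n}. cmod (x k))" for j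
  have row: "cmod (x j) \<le> 3/2 * T (Suc j) + \<delta>" if j: "j < n" for j
  proof -
    have split: "{..<n} = {..<j} \<union> {j..<n}" using j by auto
    have "(\<Sum>k<n. b j k * x k) = (\<Sum>k<j. b j k * x k) + (\<Sum>k\<in>{j..<n}. b j k * x k)"
      unfolding split by (rule sum.union_disjoint) auto
    also have "(\<Sum>k\<in>{j..<n}. b j k * x k) = x j + (\<Sum>k\<in>{Suc j..<n}. b j k * x k)"
      using j d[OF j] by (simp add: sum.atLeast_Suc_lessThan)
    finally have h0: "(\<Sum>k<j. b j k * x k) + (x j + (\<Sum>k\<in>{Suc j..<n}. b j k * x k)) = 0"
      using eq[OF j] by simp
    have "x j = ((\<Sum>k<j. b j k * x k) + (x j + (\<Sum>k\<in>{Suc j..<n}. b j k * x k)))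
       - ((\<Sum>k<j. b j k * x k) + (\<Sum>k\<in>{Suc j..<n}. b j k * x k))" by simp
    hence "x j = - ((\<Sum>k<j. b j k * x k) + (\<Sum>k\<in>{Suc j..<n}. b j k * x k))"
      using h0 by simp
    hence "cmod (x j) = cmod ((\<Sum>k<j. b j k * x k) + (\<Sum>k\<in>{Suc j..<n}. b j k * x k))"
      by (simp only: norm_minus_cancel)
    also have "\<dots> \<le> cmod (\<Sum>k<j. b j k * x k) + cmod (\<Sum>k\<in>{Suc j..<n}. b j k * x k)"
      by (rule norm_triangle_ineq)
    also have "cmod (\<Sum>k<j. b j k * x k) \<le> (\<Sum>k<j. (1 / 4 ^ n) * S)"
    proof -
      have "cmod (\<Sum>k<j. b j k * x k) \<le> (\<Sum>k<j. cmod (b j k * x k))" by (rule norm_sum)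
      also have "\<dots> \<le> (\<Sum>k<j. (1 / 4 ^ n) * S)"
      proof (rule sum_mono)
        fix k assume "k \<in> {..<j}"
        hence k: "k < j" by simp
        have "cmod (b j k * x k) = cmod (b j k) * cmod (x k)" by (simp add: norm_mult)
        also have "\<dots> \<le> (1 / 4 ^ n) * S"
          using lo[OF k j] Sge[of k] k j by (intro mult_mono) auto
        finally show "cmod (b j k * x k) \<le> (1 / 4 ^ n) * S" .
      qed
      finally show ?thesis .
    qed
    also have "(\<Sum>k<j. (1 / 4 ^ n) * S) \<le> \<delta>"
    proof -
      have "(\<Sum>k<j. (1 / 4 ^ n) * S) = real j * ((1 / 4 ^ n) * S)" by simp
      also have "\<dots> \<le> real (n-1) * ((1 / 4 ^ n) * S)"
        using j Spos by (intro mult_right_mono) auto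
      finally show ?thesis unfolding \<delta>_def by simp
    qed
    also have "cmod (\<Sum>k\<in>{Suc j..<n}. b j k * x k) \<le> 3/2 * T (Suc j)"
    proof -
      have "cmod (\<Sum>k\<in>{Suc j..<n}. b j k * x k) \<le> (\<Sum>k\<in>{Suc j..<n}. cmod (b j k * x k))"
        by (rule norm_sum)
      also have "\<dots> \<le> (\<Sum>k\<in>{Suc j..<n}. 3/2 * cmod (x k))"
      proof (rule sum_mono)
        fix k assume "k \<in> {Suc j..<n}"
        hence k: "j < k" "k < n" by auto
        show "cmod (b j k * x k) \<le> 3/2 * cmod (x k)"
        proof -
          have "cmod (b j k) * cmod (x k) \<le> 3/2 * cmod (x k)" using up[OF k] by (intro mult_right_mono) auto
          thus ?thesis by (simp add: norm_mult)
        qed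
      qed
      finally show ?thesis unfolding T_def by (simp add: sum_distrib_left)
    qed
    finally show ?thesis by linarith
  qed
  have Tn: "T n = 0" unfolding T_def by simp
  have Tstep: "T j = cmod (x j) + T (Suc j)" if "j < n" for j
    unfolding T_def using that by (simp add: sum.atLeast_Suc_lessThan)
  have \<delta>pos: "\<delta> \<ge> 0" unfolding \<delta>_def using Spos by simp
  have ind: "m \<le> n \<Longrightarrow> T (n - m) \<le> \<delta> * ((5/2) ^ m - 1)" for m
  proof (induction m)
    case 0 then show ?case using Tn by simp
  next
    case (Suc m)
    define j where "j = n - Suc m"
    have j: "j < n" and jj: "Suc j = n - m" using Suc.prems unfolding j_def by auto
    have IH: "T (Suc j) \<le> \<delta> * ((5/2) ^ m - 1)" using Suc jj by simp
    have "T j \<le> 5/2 * T (Suc j) + \<delta>" using Tstep[OF j] row[OF j] by linarith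
    also have "\<dots> \<le> 5/2 * (\<delta> * ((5/2) ^ m - 1)) + \<delta>" using IH by linarith
    also have "\<dots> \<le> \<delta> * ((5/2) ^ Suc m - 1)" using \<delta>pos by (simp add: algebra_simps)
    finally show ?case unfolding j_def .
  qed
  have "T 0 \<le> \<delta> * ((5/2) ^ n - 1)" using ind[of n] by simp
  also have "\<dots> \<le> \<delta> * (5/2) ^ n" using \<delta>pos by (simp add: algebra_simps)
  also have "\<dots> = (real (n - 1) * (5/8) ^ n) * S"
  proof -
    have e: "(5/8::real)^n = (5/2)^n / 4^n" by (subst power_divide[symmetric]) simp
    show ?thesis unfolding e \<delta>_def by simp
  qed
  also have "\<dots> < S" using real_bound[of n] Spos by simp
  finally have "T 0 < S" .
  moreover have "S \<le> T 0"
  proof -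
    obtain k where k: "k < n" "S = cmod (x k)"
      unfolding S_def using i Max_in[of "(\<lambda>k. cmod (x k)) ` {..<n}"] by fastforce
    have "cmod (x k) \<le> T 0" unfolding T_def
      using k by (intro member_le_sum) auto
    thus ?thesis using k by simp
  qed
  ultimately show False by simp
qed

theorem lemma9:
  fixes B :: "complex mat" and n :: nat
  assumes "B \<in> carrier_mat n n"
    and "\<And>j. j < n \<Longrightarrow> B $$ (j, j) = 1"
    and "\<And>j k. j < k \<Longrightarrow> k < n \<Longrightarrow> cmod (B $$ (j, k)) < 3 / 2"
    and "\<And>j k. k < j \<Longrightarrow> j < n \<Longrightarrow> cmod (B $$ (j, k)) < 1 / 4 ^ n"
  shows "det B \<noteq> 0"
proof
  assume "det B = 0"
  then obtain v where v: "v \<in> carrier_vec n" "v \<noteq> 0\<^sub>v n" "B *\<^sub>v v = 0\<^sub>v n"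
    using det_0_iff_vec_prod_zero[OF assms(1)] by blast
  have eq: "(\<Sum>k<n. B $$ (j, k) * v $ k) = 0" if j: "j < n" for j
  proof -
    have "(B *\<^sub>v v) $ j = 0" using v(3) j by simp
    moreover have "(B *\<^sub>v v) $ j = row B j \<bullet> v"
      using j assms(1) by (intro index_mult_mat_vec) simp
    moreover have "row B j \<bullet> v = (\<Sum>k\<in>{0..<n}. row B j $ k * v $ k)"
      using v(1) unfolding scalar_prod_def by simp
    moreover have "(\<Sum>k\<in>{0..<n}. row B j $ k * v $ k) = (\<Sum>k\<in>{0..<n}. B $$ (j, k) * v $ k)"
      using assms(1) j by (intro sum.cong refl) (auto simp: index_row)
    ultimately show ?thesis by (simp add: atLeast0LessThan)
  qed
  have "\<And>i. i < n \<Longrightarrow> v $ i = 0"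
    using kernel_zero[of n "\<lambda>j k. B $$ (j, k)" "\<lambda>k. v $ k"] eq assms(2-4) by blast
  hence "v = 0\<^sub>v n" using v(1) by (intro eq_vecI) auto
  thus False using v(2) by simp
qed

end
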